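(* Let $F:\mathbb{R}^n\to\mathbb{R}^m$ be continuously differentiable around $\bar x$, let $g:\mathbb{R}^m\to\mathbb{R}\cup\{\infty\}$ be lower semicontinuous and convex with $\bar y:=F(\bar x)\in\operatorname{dom}g$, and let $\bar y^*\in\partial g(\bar y)$. Assume the second-order qualification condition (SOQC) holds at $\bar x$ for $\bar y^*$, i.e., for every $L\in\mathcal{S}(\partial g)(\bar y,\bar y^* )$, $\nabla F(\bar x)^Tv^*=0$ and $(0,v^* )\in L$ imply $v^*=0$. Then there is a neighborhood $\mathcal{V}\subset\mathbb{R}^n\times\mathbb{R}^m\times\mathbb{R}^m$ of $(\bar x,\bar y^*,0)$ such that for all $(\tilde x,\tilde y^*,b)\in\mathcal{V}$ with $\tilde y^*\in\partial g(F(\tilde x)+b)$ one has: for every $L\in\mathcal{S}(\partial g)(F(\tilde x)+b,\tilde y^* )$, $\nabla F(\tilde x)^Tv^*=0$ and $(0,v^* )\in L$ imply $v^*=0$; i.e., SOQC holds for $g\circ F_b$ at $\tilde x$ for $\tilde y^*$, where $F_b(x):=F(x)+b$.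
   Context: $\partial g$ is the convex subdifferential. Tangent cone: $T_\Omega(\bar z)=\operatorname{Limsup}_{t\downarrow0}(\Omega-\bar z)/t$. SC derivative: let $\mathcal{Z}_m$ be the set of $m$-dimensional linear subspaces of $\mathbb{R}^m\times\mathbb{R}^m$ with metric $d(L_1,L_2)=\|P_{L_1}-P_{L_2}\|$ ($P_L$ orthogonal projection onto $L$); let $\mathcal{O}$ be the set of $(y,y^* )\in\operatorname{gph}\partial g$ at which $T_{\operatorname{gph}\partial g}(y,y^* )$ is an $m$-dimensional subspace. Then $\mathcal{S}(\partial g)(y,y^* )$ is the set of $L\in\mathcal{Z}_m$ for which there exist $(y_k,y_k^* )\in\mathcal{O}$, $(y_k,y_k^* )\to(y,y^* )$, with $d(T_{\operatorname{gph}\partial g}(y_k,y_k^* ),L)\to0$. *)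

theory Defs
  imports "HOL-Analysis.Analysis"
begin

definition lsc_ext :: "('a::topological_space \<Rightarrow> ereal) \<Rightarrow> bool" where
  "lsc_ext g \<longleftrightarrow> (\<forall>y. g y \<le> Liminf (at y) g)"

definition convex_ext :: "('a::real_vector \<Rightarrow> ereal) \<Rightarrow> bool" where
  "convex_ext g \<longleftrightarrow> convex {(y, t::real). g y \<le> ereal t}"

definition edom :: "('a \<Rightarrow> ereal) \<Rightarrow> 'a set" where
  "edom g = {y. g y < \<infinity>}"

definition subdiff :: "('a::real_inner \<Rightarrow> ereal) \<Rightarrow> 'a \<Rightarrow> 'a set" where
  "subdiff g y = {v. y \<in> edom g \<and>
     (\<forall>z. ereal (real_of_ereal (g y) + v \<bullet> (z - y)) \<le> g z)}"

definition graph_subdiff :: "('a::real_inner \<Rightarrow> ereal) \<Rightarrow> ('a \<times> 'a) set" where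
  "graph_subdiff g = {(y, v). v \<in> subdiff g y}"

text \<open>Tangent (Bouligand) cone: outer limit of (Omega - z)/t as t decreases to 0.\<close>
definition tangent_cone :: "'a::real_normed_vector set \<Rightarrow> 'a \<Rightarrow> 'a set" where
  "tangent_cone \<Omega> z = {w. \<exists>t :: nat \<Rightarrow> real. \<exists>ws :: nat \<Rightarrow> 'a.
      (\<forall>k. t k > 0) \<and> t \<longlonglongrightarrow> 0 \<and> ws \<longlonglongrightarrow> w \<and> (\<forall>k. z + t k *\<^sub>R ws k \<in> \<Omega>)}"

definition proj :: "'a::euclidean_space set \<Rightarrow> 'a \<Rightarrow> 'a" where
  "proj L x = (THE p. p \<in> L \<and> (\<forall>l\<in>L. (x - p) \<bullet> l = 0))"

definition subspace_dist :: "'a::euclidean_space set \<Rightarrow> 'a set \<Rightarrow> real" where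
  "subspace_dist L1 L2 = onorm (\<lambda>x. proj L1 x - proj L2 x)"

definition Zm :: "((real^'m) \<times> (real^'m)) set set" where
  "Zm = {L. subspace L \<and> dim L = CARD('m)}"

definition Oset :: "(real^'m \<Rightarrow> ereal) \<Rightarrow> ((real^'m) \<times> (real^'m)) set" where
  "Oset g = {p. p \<in> graph_subdiff g \<and> tangent_cone (graph_subdiff g) p \<in> Zm}"

definition SC_deriv :: "(real^'m \<Rightarrow> ereal) \<Rightarrow> real^'m \<Rightarrow> real^'m \<Rightarrow> ((real^'m) \<times> (real^'m)) set set" where
  "SC_deriv g y v = {L \<in> Zm. \<exists>p :: nat \<Rightarrow> (real^'m) \<times> (real^'m).
      (\<forall>k. p k \<in> Oset g) \<and> p \<longlonglongrightarrow> (y, v) \<and>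
      (\<lambda>k. subspace_dist (tangent_cone (graph_subdiff g) (p k)) L) \<longlonglongrightarrow> 0}"

end

theory Submission
  imports Defs
begin

lemma proj_unique:
  fixes S :: "'a::euclidean_space set"
  assumes "subspace S" "p \<in> S" "\<forall>l\<in>S. (x - p) \<bullet> l = 0"
  shows "proj S x = p"
proof -
  have uq: "q = p" if "q \<in> S" "\<forall>l\<in>S. (x - q) \<bullet> l = 0" for q
  proof -
    have d: "p - q \<in> S" using assms that by (simp add: subspace_diff)
    have "(x - p) \<bullet> (p - q) = 0" "(x - q) \<bullet> (p - q) = 0" using assms that d by auto
    then have "(p - q) \<bullet> (p - q) = 0" by (simp add: algebra_simps inner_diff_left)
    then show ?thesis by simp
  qed
  show ?thesis unfolding proj_def
  proof (rule the_equality)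
    show "p \<in> S \<and> (\<forall>l\<in>S. (x - p) \<bullet> l = 0)" using assms by blast
    fix q assume "q \<in> S \<and> (\<forall>l\<in>S. (x - q) \<bullet> l = 0)"
    then show "q = p" using uq by blast
  qed
qed

lemma proj_props:
  fixes S :: "'a::euclidean_space set"
  assumes "subspace S"
  shows "proj S x \<in> S \<and> (\<forall>l\<in>S. (x - proj S x) \<bullet> l = 0)"
proof -
  obtain y z where y: "y \<in> span S" and z: "\<And>w. w \<in> span S \<Longrightarrow> orthogonal z w" and xyz: "x = y + z"
    using orthogonal_subspace_decomp_exists by metis
  have yS: "y \<in> S" using y span_eq_iff[THEN iffD2, OF assms] by simp
  have o: "\<forall>l\<in>S. (x - y) \<bullet> l = 0" using z xyz by (auto simp: orthogonal_def span_base)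
  have "proj S x = y" by (rule proj_unique[OF assms yS o])
  then show ?thesis using yS o by simp
qed

lemma proj_in: "subspace S \<Longrightarrow> proj S x \<in> S"
  using proj_props by blast
lemma proj_orth: "subspace S \<Longrightarrow> l \<in> S \<Longrightarrow> (x - proj S x) \<bullet> l = 0"
  using proj_props by blast

lemma proj_id: "subspace S \<Longrightarrow> x \<in> S \<Longrightarrow> proj S x = x"
  by (rule proj_unique) auto

lemma proj_linear:
  fixes S :: "'a::euclidean_space set"
  assumes S: "subspace S"
  shows "linear (proj S)"
proof (rule linearI)
  fix x y
  show "proj S (x + y) = proj S x + proj S y"
  proof (rule proj_unique[OF S])
    show "proj S x + proj S y \<in> S" using S by (simp add: subspace_add proj_in)
    show "\<forall>l\<in>S. (x + y - (proj S x + proj S y)) \<bullet> l = 0"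
    proof
      fix l assume l: "l \<in> S"
      have e: "x + y - (proj S x + proj S y) = (x - proj S x) + (y - proj S y)" by simp
      have "(x + y - (proj S x + proj S y)) \<bullet> l = (x - proj S x) \<bullet> l + (y - proj S y) \<bullet> l"
        unfolding e by (rule inner_add_left)
      then show "(x + y - (proj S x + proj S y)) \<bullet> l = 0" using proj_orth[OF S l] by simp
    qed
  qed
next
  fix c :: real and x
  show "proj S (c *\<^sub>R x) = c *\<^sub>R proj S x"
  proof (rule proj_unique[OF S])
    show "c *\<^sub>R proj S x \<in> S" using S by (simp add: subspace_scale proj_in)
    show "\<forall>l\<in>S. (c *\<^sub>R x - c *\<^sub>R proj S x) \<bullet> l = 0"
    proof
    fix l assume l: "l \<in> S"
    have e: "c *\<^sub>R x - c *\<^sub>R proj S x = c *\<^sub>R (x - proj S x)" by (simp add: scaleR_diff_right)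
    have "(c *\<^sub>R x - c *\<^sub>R proj S x) \<bullet> l = c * ((x - proj S x) \<bullet> l)"
      unfolding e by (rule inner_scaleR_left)
    then show "(c *\<^sub>R x - c *\<^sub>R proj S x) \<bullet> l = 0" using proj_orth[OF S l] by simp
  qed
  qed
qed

lemma proj_blin: "subspace (S::'a::euclidean_space set) \<Longrightarrow> bounded_linear (proj S)"
  using proj_linear linear_conv_bounded_linear by blast

lemma proj_sym:
  assumes S: "subspace S"
  shows "proj S x \<bullet> y = x \<bullet> proj S y"
proof -
  have "(x - proj S x) \<bullet> proj S y = 0" by (rule proj_orth[OF S proj_in[OF S]])
  moreover have "(y - proj S y) \<bullet> proj S x = 0" by (rule proj_orth[OF S proj_in[OF S]])
  ultimately have "x \<bullet> proj S y = proj S x \<bullet> proj S y" "y \<bullet> proj S x = proj S y \<bullet> proj S x"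
    by (simp_all add: inner_diff_left)
  then show ?thesis by (simp add: inner_commute)
qed

lemma proj_idem: "subspace S \<Longrightarrow> proj S (proj S x) = proj S x"
  by (simp add: proj_id proj_in)

lemma proj_norm:
  fixes S :: "'a::euclidean_space set"
  assumes S: "subspace S"
  shows "norm (proj S x) \<le> norm x"
proof -
  have o: "(x - proj S x) \<bullet> proj S x = 0" by (rule proj_orth[OF S proj_in[OF S]])
  have "norm (proj S x + (x - proj S x)) ^ 2 = norm (proj S x) ^ 2 + norm (x - proj S x) ^ 2"
    by (rule norm_add_Pythagorean) (metis orthogonal_def o inner_commute)
  then have "norm (proj S x) ^ 2 \<le> norm x ^ 2"
    by simp
  then show ?thesis by (rule power2_le_imp_le) simp
qed

definition tr :: "('a::euclidean_space \<Rightarrow> 'a) \<Rightarrow> real" where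
  "tr A = (\<Sum>b\<in>Basis. A b \<bullet> b)"

lemma tr_proj:
  fixes S :: "'a::euclidean_space set"
  assumes S: "subspace S"
  shows "tr (proj S) = real (dim S)"
proof -
  obtain B where BS: "B \<subseteq> S" and po: "pairwise orthogonal B"
    and n1: "\<And>x. x \<in> B \<Longrightarrow> norm x = 1" and ind: "independent B" and cB: "card B = dim S"
    and sp: "span B = S"
    using orthonormal_basis_subspace[OF S] by blast
  have fB: "finite B" using ind independent_imp_finite by blast
  have ee: "e \<bullet> e = 1" if "e \<in> B" for e using n1[OF that] by (simp add: norm_eq_1)
  have eo: "e \<bullet> e' = 0" if "e \<in> B" "e' \<in> B" "e \<noteq> e'" for e e'
    using po that by (auto simp: pairwise_def orthogonal_def)
  have pf: "proj S x = (\<Sum>e\<in>B. (x \<bullet> e) *\<^sub>R e)" for x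
  proof (rule proj_unique[OF S])
    show "(\<Sum>e\<in>B. (x \<bullet> e) *\<^sub>R e) \<in> S"
      using BS S by (auto intro!: subspace_sum subspace_scale)
    have ob: "(x - (\<Sum>e\<in>B. (x \<bullet> e) *\<^sub>R e)) \<bullet> y = 0" if y: "y \<in> B" for y
    proof -
      have "(\<Sum>e\<in>B. (x \<bullet> e) *\<^sub>R e) \<bullet> y = (\<Sum>e\<in>B. (x \<bullet> e) * (e \<bullet> y))"
        by (simp add: inner_sum_left)
      also have "\<dots> = (x \<bullet> y) * (y \<bullet> y) + (\<Sum>e\<in>B-{y}. (x \<bullet> e) * (e \<bullet> y))"
        using fB y by (simp add: sum.remove)
      also have "\<dots> = x \<bullet> y" using ee[OF y] eo y by simp
      finally show ?thesis by (simp add: inner_diff_left)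
    qed
    show "\<forall>l\<in>S. (x - (\<Sum>e\<in>B. (x \<bullet> e) *\<^sub>R e)) \<bullet> l = 0"
    proof
      fix l assume "l \<in> S"
      then have "l \<in> span B" using sp by simp
      then have "orthogonal (x - (\<Sum>e\<in>B. (x \<bullet> e) *\<^sub>R e)) l"
        by (rule orthogonal_to_span) (use ob in \<open>auto simp: orthogonal_def\<close>)
      then show "(x - (\<Sum>e\<in>B. (x \<bullet> e) *\<^sub>R e)) \<bullet> l = 0" by (simp add: orthogonal_def)
    qed
  qed
  have "tr (proj S) = (\<Sum>b\<in>Basis. \<Sum>e\<in>B. (b \<bullet> e) * (e \<bullet> b))"
    unfolding tr_def pf by (simp add: inner_sum_left)
  also have "\<dots> = (\<Sum>e\<in>B. \<Sum>b\<in>Basis. (e \<bullet> b) * (e \<bullet> b))"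
    by (subst sum.swap) (simp add: inner_commute)
  also have "\<dots> = (\<Sum>e\<in>B. e \<bullet> e)"
    by (simp add: euclidean_inner[symmetric])
  also have "\<dots> = (\<Sum>e\<in>B. 1)" using ee by simp
  finally show ?thesis using cB by simp
qed

lemma dist_lim:
  fixes f :: "nat \<Rightarrow> 'a::metric_space"
  assumes "\<And>k. dist (f k) a < inverse (real (Suc k))"
  shows "f \<longlonglongrightarrow> a"
proof -
  have "(\<lambda>k. dist (f k) a) \<longlonglongrightarrow> 0"
  proof (rule tendsto_sandwich[of "\<lambda>_. 0" _ _ "\<lambda>k. inverse (real (Suc k))"])
    show "\<forall>\<^sub>F n in sequentially. 0 \<le> dist (f n) a" by simp
    show "\<forall>\<^sub>F n in sequentially. dist (f n) a \<le> inverse (real (Suc n))"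
    proof (rule always_eventually, rule allI)
      fix n show "dist (f n) a \<le> inverse (real (Suc n))" using assms[of n] by (rule less_imp_le)
    qed
  qed (rule tendsto_const, rule LIMSEQ_inverse_real_of_nat)
  then show ?thesis by (subst tendsto_dist_iff)
qed

lemma adj0:
  fixes f :: "'a::euclidean_space \<Rightarrow> 'b::euclidean_space"
  assumes "linear f"
  shows "adjoint f v = 0 \<longleftrightarrow> (\<forall>w. f w \<bullet> v = 0)"
proof
  assume "adjoint f v = 0" then show "\<forall>w. f w \<bullet> v = 0"
    using adjoint_works[OF assms] by (metis inner_zero_right)
next
  assume "\<forall>w. f w \<bullet> v = 0"
  then have "adjoint f v \<bullet> adjoint f v = 0" using adjoint_works[OF assms] by metis
  then show "adjoint f v = 0" by simp
qed

lemma lin_blin: "linear (blinfun_apply f)"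
  by (simp add: bounded_linear.linear blinfun.bounded_linear_right)

theorem proposition3p5:
  fixes F :: "real^'n \<Rightarrow> real^'m"
    and F' :: "real^'n \<Rightarrow> ((real^'n) \<Rightarrow>\<^sub>L (real^'m))"
    and g :: "real^'m \<Rightarrow> ereal"
    and U :: "(real^'n) set"
    and xbar :: "real^'n" and ybarstar :: "real^'m"
  assumes U: "open U" "xbar \<in> U"
    and F_deriv: "\<forall>x\<in>U. (F has_derivative blinfun_apply (F' x)) (at x)"
    and F'_cont: "continuous_on U F'"
    and g_proper: "\<forall>y. g y \<noteq> -\<infinity>"
    and g_lsc: "lsc_ext g"
    and g_convex: "convex_ext g"
    and ybar_dom: "F xbar \<in> edom g"
    and ystar: "ybarstar \<in> subdiff g (F xbar)"
    and SOQC: "\<forall>L\<in>SC_deriv g (F xbar) ybarstar. \<forall>v.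
                 adjoint (blinfun_apply (F' xbar)) v = 0 \<and> (0, v) \<in> L \<longrightarrow> v = 0"
  shows "\<exists>V :: ((real^'n) \<times> (real^'m) \<times> (real^'m)) set. open V \<and> (xbar, ybarstar, 0) \<in> V \<and>
     (\<forall>x ystar b. (x, ystar, b) \<in> V \<and> ystar \<in> subdiff g (F x + b) \<longrightarrow>
        (\<forall>L\<in>SC_deriv g (F x + b) ystar. \<forall>v.
            adjoint (blinfun_apply (F' x)) v = 0 \<and> (0, v) \<in> L \<longrightarrow> v = 0))"
proof (rule ccontr)
  assume neg: "\<not> ?thesis"
  define c where "c = (xbar, ybarstar, 0::real^'m)"
  have SCZ: "L \<in> Zm" if "L \<in> SC_deriv g y z" for L y z using that by (simp add: SC_deriv_def)
  have ZS: "subspace L" if "L \<in> Zm" for L :: "((real^'m) \<times> (real^'m)) set"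
    using that by (simp add: Zm_def)
  have bad: "\<forall>k. \<exists>x ys b L v. dist (x, ys, b) c < inverse (real (Suc k)) \<and> x \<in> U \<and>
     L \<in> SC_deriv g (F x + b) ys \<and> (\<forall>w. blinfun_apply (F' x) w \<bullet> v = 0) \<and> (0, v) \<in> L \<and> norm v = 1"
  proof
    fix k
    define V where "V = ball c (inverse (real (Suc k))) \<inter> (U \<times> UNIV)"
    have oV: "open V" using U unfolding V_def by (intro open_Int open_ball open_Times) auto
    have cV: "(xbar, ybarstar, 0) \<in> V" using U unfolding V_def c_def by simp
    from neg oV cV obtain x ys b where xV: "(x, ys, b) \<in> V" and
      nq: "\<not> (\<forall>L\<in>SC_deriv g (F x + b) ys. \<forall>v.
            adjoint (blinfun_apply (F' x)) v = 0 \<and> (0, v) \<in> L \<longrightarrow> v = 0)"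
      by blast
    from nq obtain L v where L: "L \<in> SC_deriv g (F x + b) ys" and adj: "adjoint (blinfun_apply (F' x)) v = 0"
      and vL: "(0, v) \<in> L" and v0: "v \<noteq> 0" by blast
    have ip: "\<forall>w. blinfun_apply (F' x) w \<bullet> v = 0" using adj adj0[OF lin_blin] by blast
    define u where "u = inverse (norm v) *\<^sub>R v"
    have nu: "norm u = 1" using v0 by (simp add: u_def)
    have ipu: "\<forall>w. blinfun_apply (F' x) w \<bullet> u = 0" using ip by (simp add: u_def)
    have eq: "(0::real^'m, u) = inverse (norm v) *\<^sub>R (0, v)" by (simp add: u_def)
    have uL: "(0, u) \<in> L" unfolding eq by (rule subspace_scale[OF ZS[OF SCZ[OF L]] vL])
    have d: "dist (x, ys, b) c < inverse (real (Suc k))" using xV unfolding V_def by (simp add: dist_commute)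
    have xU: "x \<in> U" using xV unfolding V_def by simp
    show "\<exists>x ys b L v. dist (x, ys, b) c < inverse (real (Suc k)) \<and> x \<in> U \<and>
     L \<in> SC_deriv g (F x + b) ys \<and> (\<forall>w. blinfun_apply (F' x) w \<bullet> v = 0) \<and> (0, v) \<in> L \<and> norm v = 1"
      using d xU L ipu uL nu by blast
  qed
  then obtain X YS B LL V where H: "\<And>k. dist (X k, YS k, B k) c < inverse (real (Suc k)) \<and> X k \<in> U \<and>
     LL k \<in> SC_deriv g (F (X k) + B k) (YS k) \<and> (\<forall>w. blinfun_apply (F' (X k)) w \<bullet> V k = 0) \<and>
     (0, V k) \<in> LL k \<and> norm (V k) = 1"
    by metis
  have LLZ: "LL k \<in> Zm" for k using H[of k] SCZ by blast
  have q_ex: "\<exists>q. q \<in> Oset g \<and> dist q (F (X k) + B k, YS k) < inverse (real (Suc k)) \<and>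
     subspace_dist (tangent_cone (graph_subdiff g) q) (LL k) < inverse (real (Suc k))" for k
  proof -
    have "LL k \<in> SC_deriv g (F (X k) + B k) (YS k)" using H[of k] by blast
    then obtain p where p1: "\<forall>j. p j \<in> Oset g" and p2: "p \<longlonglongrightarrow> (F (X k) + B k, YS k)"
      and p3: "(\<lambda>j. subspace_dist (tangent_cone (graph_subdiff g) (p j)) (LL k)) \<longlonglongrightarrow> 0"
      unfolding SC_deriv_def by blast
    have e: "0 < inverse (real (Suc k))" by simp
    have "\<forall>\<^sub>F j in sequentially. dist (p j) (F (X k) + B k, YS k) < inverse (real (Suc k)) \<and>
       dist (subspace_dist (tangent_cone (graph_subdiff g) (p j)) (LL k)) 0 < inverse (real (Suc k))"
      using tendstoD[OF p2 e] tendstoD[OF p3 e] by (rule eventually_conj)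
    then obtain N where "\<forall>j\<ge>N. dist (p j) (F (X k) + B k, YS k) < inverse (real (Suc k)) \<and>
       dist (subspace_dist (tangent_cone (graph_subdiff g) (p j)) (LL k)) 0 < inverse (real (Suc k))"
      unfolding eventually_sequentially by blast
    then have "dist (p N) (F (X k) + B k, YS k) < inverse (real (Suc k)) \<and>
       subspace_dist (tangent_cone (graph_subdiff g) (p N)) (LL k) < inverse (real (Suc k))"
      by (auto simp: dist_real_def)
    then show ?thesis using p1 by blast
  qed
  then obtain QQ where QQ: "\<And>k. QQ k \<in> Oset g \<and> dist (QQ k) (F (X k) + B k, YS k) < inverse (real (Suc k)) \<and>
     subspace_dist (tangent_cone (graph_subdiff g) (QQ k)) (LL k) < inverse (real (Suc k))"
    by metis
  define T where "T k = tangent_cone (graph_subdiff g) (QQ k)" for k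
  have TZ: "T k \<in> Zm" for k using QQ[of k] unfolding T_def Oset_def by blast
  have TS: "subspace (T k)" for k using ZS[OF TZ] .
  define P where "P k = Blinfun (proj (T k))" for k
  have PA: "blinfun_apply (P k) = proj (T k)" for k
    unfolding P_def by (rule bounded_linear_Blinfun_apply[OF proj_blin[OF TS]])
  have nP: "norm (P k) \<le> 1" for k
    by (rule norm_blinfun_bound) (simp_all add: PA proj_norm[OF TS])
  have "bounded (range P)" unfolding bounded_iff using nP by blast
  then obtain Q0 r1 where r1: "strict_mono r1" and PL1: "(P \<circ> r1) \<longlonglongrightarrow> Q0"
    using bounded_imp_convergent_subsequence by blast
  have "bounded (range (V \<circ> r1))" unfolding bounded_iff using H by auto
  then obtain w r2 where r2: "strict_mono r2" and VL2: "((V \<circ> r1) \<circ> r2) \<longlonglongrightarrow> w"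
    using bounded_imp_convergent_subsequence by blast
  define r where "r = r1 \<circ> r2"
  have r: "strict_mono r" unfolding r_def using r1 r2 by (rule strict_mono_o)
  have PL: "(\<lambda>k. P (r k)) \<longlonglongrightarrow> Q0"
    using LIMSEQ_subseq_LIMSEQ[OF PL1 r2] unfolding r_def by (simp add: o_def)
  have VL: "(\<lambda>k. V (r k)) \<longlonglongrightarrow> w"
    using VL2 unfolding r_def by (simp add: o_def)
  have XYB: "(\<lambda>k. (X k, YS k, B k)) \<longlonglongrightarrow> c" by (rule dist_lim) (use H in blast)
  have XL0: "X \<longlonglongrightarrow> xbar" using tendsto_fst[OF XYB] by (simp add: c_def)
  have YL0: "YS \<longlonglongrightarrow> ybarstar" using tendsto_fst[OF tendsto_snd[OF XYB]] by (simp add: c_def)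
  have BL0: "B \<longlonglongrightarrow> 0" using tendsto_snd[OF tendsto_snd[OF XYB]] by (simp add: c_def)
  have Fc: "isCont F xbar" using has_derivative_continuous F_deriv U(2) by blast
  have FL: "(\<lambda>k. F (X k)) \<longlonglongrightarrow> F xbar" by (rule isCont_tendsto_compose[OF Fc XL0])
  have yL: "(\<lambda>k. (F (X k) + B k, YS k)) \<longlonglongrightarrow> (F xbar, ybarstar)"
    using tendsto_Pair[OF tendsto_add[OF FL BL0] YL0] by simp
  have dq: "(\<lambda>k. QQ k - (F (X k) + B k, YS k)) \<longlonglongrightarrow> 0"
    by (rule dist_lim) (use QQ in \<open>simp add: dist_norm\<close>)
  have QQL0: "QQ \<longlonglongrightarrow> (F xbar, ybarstar)" by (rule Lim_transform[OF yL dq])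
  have F'c: "isCont F' xbar" using F'_cont U continuous_on_eq_continuous_at by blast
  have XL: "(\<lambda>k. X (r k)) \<longlonglongrightarrow> xbar" using LIMSEQ_subseq_LIMSEQ[OF XL0 r] by (simp add: o_def)
  have F'L: "(\<lambda>k. F' (X (r k))) \<longlonglongrightarrow> F' xbar" by (rule isCont_tendsto_compose[OF F'c XL])
  have QQL: "(\<lambda>k. QQ (r k)) \<longlonglongrightarrow> (F xbar, ybarstar)" using LIMSEQ_subseq_LIMSEQ[OF QQL0 r] by (simp add: o_def)
  have PP: "P k o\<^sub>L P k = P k" for k
    by (rule blinfun_eqI) (simp add: PA proj_idem[OF TS])
  have "(\<lambda>k. P (r k) o\<^sub>L P (r k)) \<longlonglongrightarrow> (Q0 o\<^sub>L Q0)"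
    by (rule bounded_bilinear.tendsto[OF bounded_bilinear_blinfun_compose PL PL])
  then have "(\<lambda>k. P (r k)) \<longlonglongrightarrow> (Q0 o\<^sub>L Q0)" by (simp add: PP)
  then have QQ0: "(Q0 o\<^sub>L Q0) = Q0" using PL LIMSEQ_unique by blast
  have Qidem: "blinfun_apply Q0 (blinfun_apply Q0 z) = blinfun_apply Q0 z" for z
    by (metis QQ0 blinfun_apply_blinfun_compose)
  have Qsym: "blinfun_apply Q0 z \<bullet> y = z \<bullet> blinfun_apply Q0 y" for z y
  proof -
    have l1: "(\<lambda>k. blinfun_apply (P (r k)) z \<bullet> y) \<longlonglongrightarrow> blinfun_apply Q0 z \<bullet> y"
      by (intro tendsto_inner blinfun.tendsto PL tendsto_const)
    have l2: "(\<lambda>k. z \<bullet> blinfun_apply (P (r k)) y) \<longlonglongrightarrow> z \<bullet> blinfun_apply Q0 y"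
      by (intro tendsto_inner blinfun.tendsto PL tendsto_const)
    have "(\<lambda>k. blinfun_apply (P (r k)) z \<bullet> y) = (\<lambda>k. z \<bullet> blinfun_apply (P (r k)) y)"
      by (simp add: PA proj_sym[OF TS])
    then show ?thesis using l1 l2 LIMSEQ_unique by metis
  qed
  have trP: "tr (blinfun_apply (P k)) = real CARD('m)" for k
    using tr_proj[OF TS[of k]] TZ[of k] by (simp add: PA Zm_def)
  have "(\<lambda>k. tr (blinfun_apply (P (r k)))) \<longlonglongrightarrow> tr (blinfun_apply Q0)"
    unfolding tr_def by (intro tendsto_sum tendsto_inner blinfun.tendsto PL tendsto_const)
  moreover have "(\<lambda>k. tr (blinfun_apply (P (r k)))) = (\<lambda>k. real CARD('m))" by (simp add: trP)
  ultimately have "(\<lambda>k. real CARD('m)) \<longlonglongrightarrow> tr (blinfun_apply Q0)" by simp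
  then have trQ: "tr (blinfun_apply Q0) = real CARD('m)"
    using tendsto_const LIMSEQ_unique by blast
  define L0 where "L0 = range (blinfun_apply Q0)"
  have L0S: "subspace L0" unfolding L0_def by (rule linear_subspace_image[OF lin_blin subspace_UNIV])
  have projQ: "proj L0 = blinfun_apply Q0"
  proof
    fix z
    show "proj L0 z = blinfun_apply Q0 z"
    proof (rule proj_unique[OF L0S])
      show "blinfun_apply Q0 z \<in> L0" unfolding L0_def by simp
      show "\<forall>l\<in>L0. (z - blinfun_apply Q0 z) \<bullet> l = 0"
      proof
        fix l assume "l \<in> L0"
        then obtain y where ly: "l = blinfun_apply Q0 y" unfolding L0_def by blast
        have "blinfun_apply Q0 z \<bullet> blinfun_apply Q0 y = blinfun_apply Q0 (blinfun_apply Q0 z) \<bullet> y"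
          using Qsym by metis
        also have "\<dots> = z \<bullet> blinfun_apply Q0 y" using Qidem Qsym by metis
        finally show "(z - blinfun_apply Q0 z) \<bullet> l = 0" unfolding ly by (simp add: inner_diff_left)
      qed
    qed
  qed
  have "real (dim L0) = real CARD('m)" using tr_proj[OF L0S] projQ trQ by simp
  then have L0Z: "L0 \<in> Zm" using L0S unfolding Zm_def by simp
  have sdL: "(\<lambda>k. subspace_dist (T (r k)) L0) \<longlonglongrightarrow> 0"
  proof -
    have eq: "subspace_dist (T k) L0 = norm (P k - Q0)" for k
    proof -
      have "(\<lambda>z. proj (T k) z - proj L0 z) = blinfun_apply (P k - Q0)"
        by (rule ext) (simp add: PA projQ blinfun.diff_left)
      then show ?thesis unfolding subspace_dist_def by (simp add: norm_blinfun.rep_eq)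
    qed
    have "(\<lambda>k. norm (P (r k) - Q0)) \<longlonglongrightarrow> norm (Q0 - Q0)"
      by (intro tendsto_norm tendsto_diff PL tendsto_const)
    then show ?thesis by (simp add: eq)
  qed
  have L0SC: "L0 \<in> SC_deriv g (F xbar) ybarstar"
    unfolding SC_deriv_def
  proof (intro CollectI conjI exI[of _ "\<lambda>k. QQ (r k)"] allI)
    show "L0 \<in> Zm" by (rule L0Z)
    show "QQ (r k) \<in> Oset g" for k using QQ by blast
    show "(\<lambda>k. QQ (r k)) \<longlonglongrightarrow> (F xbar, ybarstar)" by (rule QQL)
    show "(\<lambda>k. subspace_dist (tangent_cone (graph_subdiff g) (QQ (r k))) L0) \<longlonglongrightarrow> 0"
      using sdL unfolding T_def .
  qed
  define E where "E k = blinfun_apply (P k) (0, V k) - (0, V k)" for k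
  have nE: "dist (E k) 0 < inverse (real (Suc k))" for k
  proof -
    have LS: "subspace (LL k)" using ZS[OF LLZ] .
    have pid: "proj (LL k) (0, V k) = (0, V k)" using H[of k] proj_id[OF LS] by blast
    have bl: "bounded_linear (\<lambda>z. proj (T k) z - proj (LL k) z)"
      by (intro bounded_linear_sub proj_blin TS LS)
    have n01: "norm (0::real^'m, V k) = 1" using H[of k] by (simp add: norm_Pair)
    have "norm (E k) = norm (proj (T k) (0, V k) - proj (LL k) (0, V k))"
      unfolding E_def by (simp add: PA pid)
    also have "\<dots> \<le> onorm (\<lambda>z. proj (T k) z - proj (LL k) z) * norm (0::real^'m, V k)"
      by (rule onorm[OF bl])
    also have "\<dots> = subspace_dist (T k) (LL k)" unfolding subspace_dist_def n01 by simp
    also have "\<dots> < inverse (real (Suc k))" using QQ[of k] unfolding T_def by blast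
    finally show ?thesis by simp
  qed
  have EL0: "E \<longlonglongrightarrow> 0" by (rule dist_lim[OF nE])
  have EL: "(\<lambda>k. E (r k)) \<longlonglongrightarrow> 0" using LIMSEQ_subseq_LIMSEQ[OF EL0 r] by (simp add: o_def)
  have "(\<lambda>k. E (r k)) \<longlonglongrightarrow> blinfun_apply Q0 (0, w) - (0, w)"
    unfolding E_def by (intro tendsto_diff blinfun.tendsto PL tendsto_Pair tendsto_const VL)
  then have "blinfun_apply Q0 (0, w) - (0, w) = 0" using EL LIMSEQ_unique by blast
  then have "(0, w) = blinfun_apply Q0 (0, w)" by simp
  then have wL0: "(0, w) \<in> L0" unfolding L0_def by (metis rangeI)
  have ipw: "blinfun_apply (F' xbar) z \<bullet> w = 0" for z
  proof -
    have "(\<lambda>k. blinfun_apply (F' (X (r k))) z \<bullet> V (r k)) \<longlonglongrightarrow> blinfun_apply (F' xbar) z \<bullet> w"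
      by (intro tendsto_inner blinfun.tendsto F'L tendsto_const VL)
    moreover have "(\<lambda>k. blinfun_apply (F' (X (r k))) z \<bullet> V (r k)) = (\<lambda>k. 0)" using H by simp
    ultimately show ?thesis using tendsto_const LIMSEQ_unique by metis
  qed
  have adjw: "adjoint (blinfun_apply (F' xbar)) w = 0" using ipw adj0[OF lin_blin] by blast
  have w0: "w = 0" using SOQC L0SC adjw wL0 by blast
  have "(\<lambda>k. norm (V (r k))) \<longlonglongrightarrow> norm w" by (intro tendsto_norm VL)
  moreover have "(\<lambda>k. norm (V (r k))) = (\<lambda>k. 1)" using H by simp
  ultimately have "norm w = 1" using tendsto_const LIMSEQ_unique by metis
  then show False using w0 by simp
qed

end
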